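(* Let $C$ be a set of colors and $W\subseteq C^\omega$ any winning condition. For any positive integers $n,q$, any $n$-node arena $\mathcal{A}$ over $C$, and any $q$-state strategy $S_1$ of Player 0 in $\mathcal{A}$, there exists a chromatic $(q+1)^n$-state strategy $S_2$ of Player 0 in $\mathcal{A}$ such that for every node $v$ of $\mathcal{A}$: if $S_1$ is winning from $v$ w.r.t. $W$, then so is $S_2$.
   Context: An arena over a set of colors $C$ is a tuple $\mathcal{A} = \langle V, V_0, V_1, E\rangle$ of finite sets with $V = V_0 \sqcup V_1$, $E \subseteq V \times C \times V$, and every node having at least one outgoing edge; for $e=(s,c,t)$ write $\mathsf{source}(e)=s$, $\mathsf{col}(e)=c$, $\mathsf{target}(e)=t$. A path is a nonempty finite or infinite sequence of edges $e_1e_2\ldots$ with $\mathsf{target}(e_i)=\mathsf{source}(e_{i+1})$; for each node $v$ there is also a $0$-length path $\lambda_v$ with source and target $v$. $\mathsf{col}$ extends letterwise to sequences of edges. A strategy of Player 0 is a function $S$ assigning to each finite path $p$ with $\mathsf{target}(p)\in V_0$ an edge $S(p)$ with $\mathsf{source}(S(p))=\mathsf{target}(p)$. A path $p=e_1e_2\ldots$ is consistent with $S$ if (when $\mathsf{source}(p)\in V_0$) $e_1=S(\lambda_{\mathsf{source}(p)})$ and for each $1\le i<|p|$ with $\mathsf{target}(e_i)\in V_0$ we have $e_{i+1}=S(e_1\ldots e_i)$. For $v\in V$, $\mathsf{col}(S,v)\subseteq C^\omega$ is the set of $\mathsf{col}(p)$ over all infinite paths $p$ from $v$ consistent with $S$.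 $S$ is winning from $v$ w.r.t. $W$ if $\mathsf{col}(S,v)\subseteq W$. A memory structure is $\mathcal{M}=\langle M, m_{init},\delta\rangle$ with $M$ finite, $m_{init}\in M$, $\delta: M\times E\to M$ (extended to finite edge sequences in the usual way). $S$ is an $\mathcal{M}$-strategy if for all finite paths $p_1,p_2$ with $\mathsf{target}(p_1)=\mathsf{target}(p_2)\in V_0$, $\delta(m_{init},p_1)=\delta(m_{init},p_2)$ implies $S(p_1)=S(p_2)$. $\mathcal{M}$ is chromatic if there is $\sigma: M\times C\to M$ with $\delta(m,e)=\sigma(m,\mathsf{col}(e))$ for all $m,e$. A (chromatic) $q$-state strategy is an $\mathcal{M}$-strategy for some (chromatic) memory structure $\mathcal{M}$ with $|M|=q$. *)

theory Defs
  imports Main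
begin

type_synonym ('v, 'c) edge = "'v \<times> 'c \<times> 'v"

definition esrc :: "('v, 'c) edge \<Rightarrow> 'v" where "esrc e = fst e"
definition ecol :: "('v, 'c) edge \<Rightarrow> 'c" where "ecol e = fst (snd e)"
definition etgt :: "('v, 'c) edge \<Rightarrow> 'v" where "etgt e = snd (snd e)"

definition arena :: "'c set \<Rightarrow> 'v set \<Rightarrow> 'v set \<Rightarrow> ('v, 'c) edge set \<Rightarrow> bool" where
  "arena C V0 V1 E \<longleftrightarrow> finite V0 \<and> finite V1 \<and> finite E \<and> V0 \<inter> V1 = {} \<and>
     E \<subseteq> (V0 \<union> V1) \<times> C \<times> (V0 \<union> V1) \<and>
     (\<forall>v \<in> V0 \<union> V1. \<exists>e \<in> E. esrc e = v)"

text \<open>A finite path is represented by its source node together with its list of edges;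
  (v, []) is the 0-length path lambda_v.\<close>
type_synonym ('v, 'c) fpath = "'v \<times> ('v, 'c) edge list"

definition fin_path :: "'v set \<Rightarrow> ('v, 'c) edge set \<Rightarrow> ('v, 'c) fpath \<Rightarrow> bool" where
  "fin_path V E p \<longleftrightarrow> fst p \<in> V \<and> set (snd p) \<subseteq> E \<and>
     (snd p \<noteq> [] \<longrightarrow> esrc (hd (snd p)) = fst p) \<and>
     (\<forall>i. Suc i < length (snd p) \<longrightarrow> etgt (snd p ! i) = esrc (snd p ! Suc i))"

definition fp_target :: "('v, 'c) fpath \<Rightarrow> 'v" where
  "fp_target p = (if snd p = [] then fst p else etgt (last (snd p)))"

definition strategy0 :: "'v set \<Rightarrow> 'v set \<Rightarrow> ('v, 'c) edge set \<Rightarrow> (('v, 'c) fpath \<Rightarrow> ('v, 'c) edge) \<Rightarrow> bool" where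
  "strategy0 V0 V1 E S \<longleftrightarrow> (\<forall>p. fin_path (V0 \<union> V1) E p \<and> fp_target p \<in> V0 \<longrightarrow>
     S p \<in> E \<and> esrc (S p) = fp_target p)"

definition consistent_inf :: "'v set \<Rightarrow> ('v, 'c) edge set \<Rightarrow> (('v, 'c) fpath \<Rightarrow> ('v, 'c) edge) \<Rightarrow>
    'v \<Rightarrow> (nat \<Rightarrow> ('v, 'c) edge) \<Rightarrow> bool" where
  "consistent_inf V0 E S v p \<longleftrightarrow> (\<forall>i. p i \<in> E) \<and> esrc (p 0) = v \<and>
     (\<forall>i. etgt (p i) = esrc (p (Suc i))) \<and>
     (v \<in> V0 \<longrightarrow> p 0 = S (v, [])) \<and>
     (\<forall>i. etgt (p i) \<in> V0 \<longrightarrow> p (Suc i) = S (v, map p [0..<Suc i]))"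

definition col_outcomes :: "'v set \<Rightarrow> ('v, 'c) edge set \<Rightarrow> (('v, 'c) fpath \<Rightarrow> ('v, 'c) edge) \<Rightarrow>
    'v \<Rightarrow> (nat \<Rightarrow> 'c) set" where
  "col_outcomes V0 E S v = {ecol \<circ> p | p. consistent_inf V0 E S v p}"

definition winning_from :: "'v set \<Rightarrow> ('v, 'c) edge set \<Rightarrow> (('v, 'c) fpath \<Rightarrow> ('v, 'c) edge) \<Rightarrow>
    'v \<Rightarrow> (nat \<Rightarrow> 'c) set \<Rightarrow> bool" where
  "winning_from V0 E S v W \<longleftrightarrow> col_outcomes V0 E S v \<subseteq> W"

definition memory_structure :: "('v, 'c) edge set \<Rightarrow> 'm set \<Rightarrow> 'm \<Rightarrow> ('m \<Rightarrow> ('v, 'c) edge \<Rightarrow> 'm) \<Rightarrow> bool" where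
  "memory_structure E M m0 \<delta> \<longleftrightarrow> finite M \<and> m0 \<in> M \<and> (\<forall>m \<in> M. \<forall>e \<in> E. \<delta> m e \<in> M)"

definition mem_run :: "'m \<Rightarrow> ('m \<Rightarrow> ('v, 'c) edge \<Rightarrow> 'm) \<Rightarrow> ('v, 'c) fpath \<Rightarrow> 'm" where
  "mem_run m0 \<delta> p = foldl \<delta> m0 (snd p)"

definition is_M_strategy :: "'v set \<Rightarrow> 'v set \<Rightarrow> ('v, 'c) edge set \<Rightarrow> 'm \<Rightarrow> ('m \<Rightarrow> ('v, 'c) edge \<Rightarrow> 'm) \<Rightarrow>
    (('v, 'c) fpath \<Rightarrow> ('v, 'c) edge) \<Rightarrow> bool" where
  "is_M_strategy V0 V1 E m0 \<delta> S \<longleftrightarrow>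
     (\<forall>p1 p2. fin_path (V0 \<union> V1) E p1 \<and> fin_path (V0 \<union> V1) E p2 \<and>
        fp_target p1 = fp_target p2 \<and> fp_target p1 \<in> V0 \<and>
        mem_run m0 \<delta> p1 = mem_run m0 \<delta> p2 \<longrightarrow> S p1 = S p2)"

definition chromatic :: "('v, 'c) edge set \<Rightarrow> 'm set \<Rightarrow> ('m \<Rightarrow> ('v, 'c) edge \<Rightarrow> 'm) \<Rightarrow> bool" where
  "chromatic E M \<delta> \<longleftrightarrow> (\<exists>\<sigma> :: 'm \<Rightarrow> 'c \<Rightarrow> 'm. \<forall>m \<in> M. \<forall>e \<in> E. \<delta> m e = \<sigma> m (ecol e))"

end

theory Submission
  imports Defs "HOL-Library.FuncSet"
begin

primrec anc :: "(nat \<Rightarrow> 'a \<Rightarrow> 'a) \<Rightarrow> nat \<Rightarrow> nat \<Rightarrow> 'a \<Rightarrow> 'a" where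
  "anc par k 0 u = u"
| "anc par k (Suc d) u = anc par k d (par (k + d) u)"

lemma anc_L:
  assumes "\<And>j w. w \<in> L (Suc j) \<Longrightarrow> par j w \<in> L j"
  shows "u \<in> L (k + d) \<Longrightarrow> anc par k d u \<in> L k"
proof (induction d arbitrary: u)
  case 0 then show ?case by simp
next
  case (Suc d)
  then have "par (k + d) u \<in> L (k + d)" using assms by simp
  then show ?case using Suc.IH by simp
qed

lemma anc_Suc: "anc par k (Suc d) u = par k (anc par (Suc k) d u)"
  by (induction d arbitrary: u) simp_all

lemma koenig:
  fixes L :: "nat \<Rightarrow> 'a set" and par :: "nat \<Rightarrow> 'a \<Rightarrow> 'a"
  assumes fin: "finite V" and sub: "\<And>k. L k \<subseteq> V" and ne: "\<And>k. L k \<noteq> {}"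
    and par: "\<And>k u. u \<in> L (Suc k) \<Longrightarrow> par k u \<in> L k"
  shows "\<exists>x. \<forall>k. x k \<in> L k \<and> par k (x (Suc k)) = x k"
proof -
  define good where "good k x \<longleftrightarrow> infinite {d. \<exists>u\<in>L (k + d). anc par k d u = x}" for k x
  have start: "\<exists>x. x \<in> L 0 \<and> good 0 x"
  proof -
    have "\<forall>d. \<exists>u. u \<in> L d" using ne by blast
    then obtain uu where uu: "\<And>d. uu d \<in> L d" by metis
    define g where "g d = anc par 0 d (uu d)" for d
    have gL: "g d \<in> L 0" for d unfolding g_def using anc_L[where L=L and par=par and u="uu d" and k=0 and d=d, OF par] uu by simp
    have "finite (g ` UNIV)" using gL sub fin by (meson finite_subset image_subsetI)
    then obtain d0 where "infinite {d \<in> UNIV. g d = g d0}"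
      using pigeonhole_infinite[of "UNIV::nat set" g] by auto
    moreover have "{d \<in> UNIV. g d = g d0} \<subseteq> {d. \<exists>u\<in>L (0 + d). anc par 0 d u = g d0}"
      using uu unfolding g_def by auto
    ultimately have "good 0 (g d0)" unfolding good_def using finite_subset by blast
    then show ?thesis using gL by blast
  qed
  have step: "\<exists>y. y \<in> L (Suc k) \<and> par k y = x \<and> good (Suc k) y" if "good k x" for k x
  proof -
    define D where "D = {d. \<exists>u\<in>L (k + d). anc par k d u = x}"
    define D' where "D' = {d. Suc d \<in> D}"
    have "D \<subseteq> insert 0 (Suc ` D')"
    proof
      fix d assume "d \<in> D"
      then show "d \<in> insert 0 (Suc ` D')" unfolding D'_def by (cases d) auto
    qed
    then have infD': "infinite D'" using that unfolding good_def D_def[symmetric]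
      by (meson finite_imageI finite_insert finite_subset)
    define uu where "uu d = (SOME u. u \<in> L (k + Suc d) \<and> anc par k (Suc d) u = x)" for d
    have uu: "uu d \<in> L (k + Suc d) \<and> anc par k (Suc d) (uu d) = x" if "d \<in> D'" for d
    proof -
      have "\<exists>u. u \<in> L (k + Suc d) \<and> anc par k (Suc d) u = x" using that unfolding D'_def D_def by auto
      then show ?thesis unfolding uu_def by (rule someI_ex)
    qed
    define y where "y d = anc par (Suc k) d (uu d)" for d
    have yL: "y d \<in> L (Suc k)" if "d \<in> D'" for d
      unfolding y_def using anc_L[where L=L and par=par and u="uu d" and k="Suc k" and d=d, OF par] uu[OF that] by simp
    have "finite (y ` D')" using yL sub fin by (meson finite_subset image_subsetI)
    then obtain d0 where d0: "d0 \<in> D'" and inf: "infinite {d \<in> D'. y d = y d0}"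
      using pigeonhole_infinite[OF infD'] by auto
    have "{d \<in> D'. y d = y d0} \<subseteq> {d. \<exists>u\<in>L (Suc k + d). anc par (Suc k) d u = y d0}"
      using uu unfolding y_def by fastforce
    then have "good (Suc k) (y d0)" unfolding good_def using inf finite_subset by blast
    moreover have "par k (y d0) = x" using uu[OF d0] anc_Suc unfolding y_def by metis
    ultimately show ?thesis using yL[OF d0] by blast
  qed
  obtain x0 where x0: "x0 \<in> L 0" "good 0 x0" using start by blast
  define nxt where "nxt k x = (SOME y. y \<in> L (Suc k) \<and> par k y = x \<and> good (Suc k) y)" for k x
  define X where "X k = rec_nat x0 nxt k" for k
  have XS: "X (Suc k) = nxt k (X k)" for k unfolding X_def by simp
  have inv: "X k \<in> L k \<and> good k (X k)" for k
  proof (induction k)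
    case 0 then show ?case using x0 unfolding X_def by simp
  next
    case (Suc k)
    then show ?case unfolding XS nxt_def using someI_ex[OF step[of k "X k"]] by blast
  qed
  have "par k (X (Suc k)) = X k" for k
    unfolding XS nxt_def using someI_ex[OF step[of k "X k"]] inv by blast
  then show ?thesis using inv by blast
qed

theorem corollary1:
  fixes C :: "'c set" and W :: "(nat \<Rightarrow> 'c) set"
    and V0 V1 :: "'v set" and E :: "('v, 'c) edge set"
    and n q :: nat
    and S1 :: "('v, 'c) fpath \<Rightarrow> ('v, 'c) edge"
    and M1 :: "'m set" and m1 :: 'm and \<delta>1 :: "'m \<Rightarrow> ('v, 'c) edge \<Rightarrow> 'm"
  assumes "W \<subseteq> {w. \<forall>i. w i \<in> C}"
    and "0 < n" and "0 < q"
    and "arena C V0 V1 E" and "card (V0 \<union> V1) = n"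
    and "strategy0 V0 V1 E S1"
    and "memory_structure E M1 m1 \<delta>1" and "card M1 = q"
    and "is_M_strategy V0 V1 E m1 \<delta>1 S1"
  shows "\<exists>S2 (M2 :: nat set) m2 \<delta>2.
           strategy0 V0 V1 E S2 \<and>
           memory_structure E M2 m2 \<delta>2 \<and> card M2 = (q + 1) ^ n \<and>
           chromatic E M2 \<delta>2 \<and> is_M_strategy V0 V1 E m2 \<delta>2 S2 \<and>
           (\<forall>v \<in> V0 \<union> V1. winning_from V0 E S1 v W \<longrightarrow> winning_from V0 E S2 v W)"
proof -
  let ?V = "V0 \<union> V1"
  have ar: "finite V0" "finite V1" "E \<subseteq> ?V \<times> C \<times> ?V" "\<forall>v \<in> ?V. \<exists>e \<in> E. esrc e = v"
    using assms(4) unfolding arena_def by auto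
  have finV: "finite ?V" using ar by simp
  have EV: "esrc e \<in> ?V \<and> etgt e \<in> ?V" if "e \<in> E" for e
    using that ar(3) unfolding esrc_def etgt_def by auto
  have mem1: "finite M1" "m1 \<in> M1" "\<And>m e. m \<in> M1 \<Longrightarrow> e \<in> E \<Longrightarrow> \<delta>1 m e \<in> M1"
    using assms(7) unfolding memory_structure_def by auto
  define Win where "Win = {u \<in> ?V. winning_from V0 E S1 u W}"
  define ch where "ch u m = (if \<exists>p. fin_path ?V E p \<and> fp_target p = u \<and> mem_run m1 \<delta>1 p = m
      then S1 (SOME p. fin_path ?V E p \<and> fp_target p = u \<and> mem_run m1 \<delta>1 p = m)
      else (SOME e. e \<in> E \<and> esrc e = u))" for u m
  have Mstrat: "S1 p1 = S1 p2" if "fin_path ?V E p1" "fin_path ?V E p2" "fp_target p1 = fp_target p2"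
    "fp_target p1 \<in> V0" "mem_run m1 \<delta>1 p1 = mem_run m1 \<delta>1 p2" for p1 p2
    using assms(9) that unfolding is_M_strategy_def by blast
  have ch_eq: "ch (fp_target p) (mem_run m1 \<delta>1 p) = S1 p" if p: "fin_path ?V E p" "fp_target p \<in> V0" for p
  proof -
    let ?P = "\<lambda>p'. fin_path ?V E p' \<and> fp_target p' = fp_target p \<and> mem_run m1 \<delta>1 p' = mem_run m1 \<delta>1 p"
    have ex: "\<exists>p'. ?P p'" using p by blast
    have sp: "?P (SOME p'. ?P p')" using someI_ex[OF ex] .
    have "S1 (SOME p'. ?P p') = S1 p"
      using Mstrat[of "SOME p'. ?P p'" p] sp p by simp
    moreover have "ch (fp_target p) (mem_run m1 \<delta>1 p) = S1 (SOME p'. ?P p')"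
      unfolding ch_def using ex by (simp only: if_True)
    ultimately show ?thesis by simp
  qed
  have ch_ok: "ch u m \<in> E \<and> esrc (ch u m) = u" if u: "u \<in> V0" for u m
  proof (cases "\<exists>p. fin_path ?V E p \<and> fp_target p = u \<and> mem_run m1 \<delta>1 p = m")
    case True
    let ?P = "\<lambda>p. fin_path ?V E p \<and> fp_target p = u \<and> mem_run m1 \<delta>1 p = m"
    define p' where "p' = (SOME p. ?P p)"
    have P': "?P p'" unfolding p'_def using someI_ex[OF True] .
    have "S1 p' \<in> E \<and> esrc (S1 p') = fp_target p'"
      using assms(6) P' u unfolding strategy0_def by blast
    moreover have "ch u m = S1 p'" unfolding ch_def p'_def using True by (simp only: if_True)
    ultimately show ?thesis using P' by simp
  next
    case False
    have "\<exists>e. e \<in> E \<and> esrc e = u" using ar(4) u by blast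
    moreover have "ch u m = (SOME e. e \<in> E \<and> esrc e = u)" unfolding ch_def by (simp only: False if_False)
    ultimately show ?thesis using someI_ex[of "\<lambda>e. e \<in> E \<and> esrc e = u"] by simp
  qed
  define ok where "ok f c e \<longleftrightarrow> e \<in> E \<and> ecol e = c \<and>
      (\<exists>m. f (esrc e) = Some m \<and> (esrc e \<in> V0 \<longrightarrow> e = ch (esrc e) m))"
    for f :: "'v \<Rightarrow> 'm option" and c e
  define pick where "pick f c u = (SOME e. ok f c e \<and> etgt e = u)" for f c u
  define upd where "upd f c = (\<lambda>u. if u \<in> ?V then (if \<exists>e. ok f c e \<and> etgt e = u
      then Some (\<delta>1 (the (f (esrc (pick f c u)))) (pick f c u)) else None) else undefined)" for f c
  define B where "B = insert None (Some ` M1)"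
  define FS where "FS = PiE ?V (\<lambda>_. B)"
  define f0 where "f0 = (\<lambda>u. if u \<in> ?V then (if u \<in> Win then Some m1 else None) else undefined)"
  have pick_ok: "ok f c (pick f c u) \<and> etgt (pick f c u) = u" if "\<exists>e. ok f c e \<and> etgt e = u" for f c u
    unfolding pick_def using someI_ex[OF that] .
  have upd_FS: "upd f c \<in> FS" if f: "f \<in> FS" for f c
  proof -
    have "upd f c u \<in> B" if u: "u \<in> ?V" for u
    proof (cases "\<exists>e. ok f c e \<and> etgt e = u")
      case True
      let ?e = "pick f c u"
      obtain m where m: "f (esrc ?e) = Some m" "?e \<in> E" using pick_ok[OF True] unfolding ok_def by blast
      have "f (esrc ?e) \<in> B" using f EV[OF m(2)] unfolding FS_def by auto
      then have "m \<in> M1" using m unfolding B_def by auto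
      then show ?thesis using True u m mem1(3) unfolding upd_def B_def by simp
    next
      case False
      have "upd f c u = None" unfolding upd_def using u False by (simp del: split_paired_Ex split_paired_All)
      then show ?thesis unfolding B_def by simp
    qed
    moreover have "upd f c u = undefined" if "u \<notin> ?V" for u unfolding upd_def using that by simp
    ultimately show ?thesis unfolding FS_def by (rule PiE_I)
  qed
  have f0_FS: "f0 \<in> FS" unfolding FS_def
    by (rule PiE_I) (auto simp: f0_def B_def mem1)
  have finB: "finite B" unfolding B_def using mem1 by simp
  have cardB: "card B = q + 1" unfolding B_def using mem1 assms(8)
    by (simp add: card_image)
  have finFS: "finite FS" unfolding FS_def using finV finB by (simp add: finite_PiE)
  have cardFS: "card FS = (q + 1) ^ n" unfolding FS_def
    using card_PiE[OF finV, of "\<lambda>_. B"] cardB assms(5) by simp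
  obtain enc where enc: "bij_betw enc FS {0..<card FS}" using ex_bij_betw_finite_nat[OF finFS] by blast
  define dec where "dec = inv_into FS enc"
  have dec_enc: "dec (enc f) = f" if "f \<in> FS" for f
    unfolding dec_def using enc that by (simp add: bij_betw_imp_inj_on)
  have enc_FS: "enc f \<in> {0..<card FS}" if "f \<in> FS" for f using enc that bij_betwE by blast
  have dec_FS: "dec k \<in> FS" if "k \<in> {0..<card FS}" for k
    unfolding dec_def using enc that by (metis bij_betw_def inv_into_into)
  define M2 where "M2 = {0..<card FS}"
  define m2 where "m2 = enc f0"
  define \<sigma> where "\<sigma> k c = enc (upd (dec k) c)" for k c
  define \<delta>2 where "\<delta>2 k e = \<sigma> k (ecol e)" for k and e :: "('v, 'c) edge"
  define S2 where "S2 p = ch (fp_target p) (the (dec (mem_run m2 \<delta>2 p) (fp_target p)))" for p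
  have run: "foldl \<delta>2 (enc f) es = enc (foldl upd f (map ecol es))" if "f \<in> FS" for es f
    using that
  proof (induction es arbitrary: f)
    case Nil then show ?case by simp
  next
    case (Cons e es)
    have "\<delta>2 (enc f) e = enc (upd f (ecol e))" unfolding \<delta>2_def \<sigma>_def using dec_enc[OF Cons.prems] by simp
    then show ?case using Cons.IH[OF upd_FS[OF Cons.prems]] by simp
  qed
  have "strategy0 V0 V1 E S2" unfolding strategy0_def S2_def using ch_ok by blast
  moreover have "memory_structure E M2 m2 \<delta>2"
    unfolding memory_structure_def M2_def m2_def \<delta>2_def \<sigma>_def
    using enc_FS f0_FS upd_FS dec_FS by auto
  moreover have "card M2 = (q + 1) ^ n" unfolding M2_def using cardFS by simp
  moreover have "chromatic E M2 \<delta>2" unfolding chromatic_def \<delta>2_def by blast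
  moreover have "is_M_strategy V0 V1 E m2 \<delta>2 S2" unfolding is_M_strategy_def S2_def by simp
  moreover have "winning_from V0 E S2 v W" if v: "v \<in> ?V" "winning_from V0 E S1 v W" for v
    unfolding winning_from_def
  proof
    fix w assume "w \<in> col_outcomes V0 E S2 v"
    then obtain p2 where w: "w = ecol \<circ> p2" and cons2: "consistent_inf V0 E S2 v p2"
      unfolding col_outcomes_def by blast
    note c2 = cons2[unfolded consistent_inf_def]
    define c where "c = ecol \<circ> p2"
    define F where "F k = foldl upd f0 (map c [0..<k])" for k
    have F_Suc: "F (Suc k) = upd (F k) (c k)" for k unfolding F_def by simp
    have F_0: "F 0 = f0" unfolding F_def by simp
    have F_FS: "F k \<in> FS" for k by (induction k) (simp_all add: F_0 F_Suc f0_FS upd_FS)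
    have F_run: "mem_run m2 \<delta>2 (v, map p2 [0..<k]) = enc (F k)" for k
      unfolding mem_run_def m2_def F_def using run[OF f0_FS] by (simp add: c_def)
    have vW: "v \<in> Win" using v unfolding Win_def by simp
    have Bk: "F k (esrc (p2 k)) \<noteq> None" for k
    proof (induction k)
      case 0 then show ?case using c2 vW v unfolding F_0 f0_def by simp
    next
      case (Suc k)
      then obtain m where Fm: "F k (esrc (p2 k)) = Some m" by blast
      have chk: "p2 k = ch (esrc (p2 k)) m" if V0: "esrc (p2 k) \<in> V0"
      proof (cases k)
        case 0
        have "p2 0 = S2 (v, [])" using c2 V0 0 by simp
        also have "\<dots> = ch v (the (F 0 v))" unfolding S2_def fp_target_def
          using F_run[of 0] dec_enc[OF F_FS] by simp
        finally show ?thesis using Fm 0 c2 by simp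
      next
        case (Suc j)
        have tg: "fp_target (v, map p2 [0..<Suc j]) = esrc (p2 k)"
          unfolding fp_target_def using c2 Suc by simp
        have "p2 k = S2 (v, map p2 [0..<Suc j])" using c2 V0 Suc by metis
        also have "\<dots> = ch (esrc (p2 k)) (the (F k (esrc (p2 k))))" unfolding S2_def tg
          using F_run[of k] dec_enc[OF F_FS] Suc by simp
        finally show ?thesis using Fm by simp
      qed
      have "ok (F k) (c k) (p2 k)" unfolding ok_def c_def using c2 Fm chk by auto
      then have ex: "\<exists>e. ok (F k) (c k) e \<and> etgt e = etgt (p2 k)" by blast
      have "etgt (p2 k) \<in> ?V" using EV c2 by blast
      then have "F (Suc k) (etgt (p2 k)) \<noteq> None" unfolding F_Suc upd_def
        using ex by (simp del: split_paired_Ex)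
      then show ?case using c2 by metis
    qed
    define L where "L k = {u \<in> ?V. F k u \<noteq> None}" for k
    define par where "par k u = esrc (pick (F k) (c k) u)" for k u
    have Lsuc: "\<exists>e. ok (F k) (c k) e \<and> etgt e = u" if "u \<in> L (Suc k)" for k u
      using that unfolding L_def F_Suc upd_def by (auto split: if_splits)
    have parL: "par k u \<in> L k" if "u \<in> L (Suc k)" for k u
    proof -
      have "ok (F k) (c k) (pick (F k) (c k) u)" using pick_ok[OF Lsuc[OF that]] by blast
      then show ?thesis unfolding ok_def par_def L_def using EV by auto
    qed
    have Lne: "L k \<noteq> {}" for k using Bk[of k] EV c2 unfolding L_def by blast
    obtain x where x: "\<And>k. x k \<in> L k" "\<And>k. par k (x (Suc k)) = x k"
    proof -
      have LV: "\<And>k. L k \<subseteq> ?V" unfolding L_def by blast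
      have "\<exists>x. \<forall>k. x k \<in> L k \<and> par k (x (Suc k)) = x k"
        by (rule koenig[where L=L and par=par, OF finV LV Lne]) (rule parL)
      then show ?thesis using that by blast
    qed
    define qq where "qq k = pick (F k) (c k) (x (Suc k))" for k
    have qq: "ok (F k) (c k) (qq k) \<and> etgt (qq k) = x (Suc k) \<and> esrc (qq k) = x k" for k
      using pick_ok[OF Lsuc[OF x(1)[of "Suc k"]]] x(2)[of k] unfolding qq_def par_def by simp
    have qqE: "qq k \<in> E" for k using qq unfolding ok_def by blast
    have x0W: "x 0 \<in> Win" and F0x: "F 0 (x 0) = Some m1"
      using x(1)[of 0] unfolding L_def F_0 f0_def by (auto split: if_splits)
    have memx: "F k (x k) = Some (mem_run m1 \<delta>1 (x 0, map qq [0..<k]))" for k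
    proof (induction k)
      case 0 then show ?case using F0x unfolding mem_run_def by simp
    next
      case (Suc k)
      have ex: "\<exists>e. ok (F k) (c k) e \<and> etgt e = x (Suc k)" using qq by blast
      have "x (Suc k) \<in> ?V" using x(1) unfolding L_def by blast
      then have "F (Suc k) (x (Suc k)) = Some (\<delta>1 (the (F k (esrc (qq k)))) (qq k))"
        unfolding F_Suc upd_def qq_def using ex by simp
      then show ?case using Suc qq unfolding mem_run_def by simp
    qed
    have fp: "fin_path ?V E (x 0, map qq [0..<k])" for k
      unfolding fin_path_def using x(1)[of 0] qqE qq unfolding L_def
      by (auto simp: hd_map nth_map)
    have tg: "fp_target (x 0, map qq [0..<k]) = x k" for k
      unfolding fp_target_def using qq by (cases k) auto
    have s1: "qq k = S1 (x 0, map qq [0..<k])" if "x k \<in> V0" for k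
    proof -
      obtain m where m: "F k (esrc (qq k)) = Some m" "esrc (qq k) \<in> V0 \<longrightarrow> qq k = ch (esrc (qq k)) m"
        using qq unfolding ok_def by blast
      have "m = mem_run m1 \<delta>1 (x 0, map qq [0..<k])" using m(1) memx qq by simp
      then have "qq k = ch (fp_target (x 0, map qq [0..<k])) (mem_run m1 \<delta>1 (x 0, map qq [0..<k]))"
        using m(2) qq that tg by simp
      then show ?thesis using ch_eq[OF fp] tg that by simp
    qed
    have "consistent_inf V0 E S1 (x 0) qq" unfolding consistent_inf_def
      using qqE qq s1[of 0] s1 by simp
    moreover have "ecol \<circ> qq = w" unfolding w using qq unfolding ok_def c_def by auto
    ultimately have "w \<in> col_outcomes V0 E S1 (x 0)" unfolding col_outcomes_def by blast
    then show "w \<in> W" using x0W unfolding Win_def winning_from_def by blast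
  qed
  ultimately show ?thesis by blast
qed

end
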